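(* Let $n\ge1$, $q$ a prime power, and let $\mathcal{F}$ be a covering of $[n]$ with no redundant basic set. The $\mathcal{F}$-combinatorial metric $d_{\mathcal{F}}$ on $\mathbb{F}_q^n$ admits a MacWilliams-type identity if and only if $\mathcal{F}$ is a $k$-partition of $[n]$ for some $k$.
   Context: For a covering $\mathcal{F}$ of $[n]$ (a family of subsets, called basic sets, whose union is $[n]$) and $x\in\mathbb{F}_q^n$ with $\mathrm{supp}(x)=\{i:x_i\neq0\}$, $\mathrm{wt}_{\mathcal{F}}(x)=\min\{|\mathcal{A}|:\mathcal{A}\subset\mathcal{F},\ \mathrm{supp}(x)\subset\bigcup_{A\in\mathcal{A}}A\}$ and $d_{\mathcal{F}}(x,y)=\mathrm{wt}_{\mathcal{F}}(x-y)$. A basic set $A$ is redundant if $A\subsetneq B$ for some $B\in\mathcal{F}$. $\mathcal{F}$ is a $k$-partition if it is a partition of $[n]$ all of whose blocks have cardinality $k$. For a linear code $\mathcal{C}\subset\mathbb{F}_q^n$, $\mathcal{C}^\perp=\{u: \sum_i u_ic_i=0\ \forall c\in\mathcal{C}\}$ and $W_{\mathcal{C}}(x,y)=\sum_{c\in\mathcal{C}}x^{D-\mathrm{wt}_{\mathcal{F}}(c)}y^{\mathrm{wt}_{\mathcal{F}}(c)}$ with $D=\max_{c\in\mathcal{C}}\mathrm{wt}_{\mathcal{F}}(c)$. The metric $d_{\mathcal{F}}$ admits a MacWilliams-type identity if for all linear codes $\mathcal{C}_1,\mathcal{C}_2\subset\mathbb{F}_q^n$, $W_{\mathcal{C}_1}=W_{\mathcal{C}_2}$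 implies $W_{\mathcal{C}_1^\perp}=W_{\mathcal{C}_2^\perp}$. *)

theory Defs
  imports Main "HOL-Library.Disjoint_Sets"
begin

text \<open>Vectors of F_q^n are modelled as functions nat => 'a vanishing outside [n] = {0..<n}.\<close>

definition vecs :: "nat \<Rightarrow> (nat \<Rightarrow> 'a::zero) set" where
  "vecs n = {x. \<forall>i\<ge>n. x i = 0}"

definition supp :: "(nat \<Rightarrow> 'a::zero) \<Rightarrow> nat set" where
  "supp x = {i. x i \<noteq> 0}"

definition is_covering :: "nat \<Rightarrow> nat set set \<Rightarrow> bool" where
  "is_covering n F \<longleftrightarrow> (\<forall>A\<in>F. A \<subseteq> {..<n}) \<and> \<Union>F = {..<n}"

definition redundant :: "nat set set \<Rightarrow> nat set \<Rightarrow> bool" where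
  "redundant F A \<longleftrightarrow> (\<exists>B\<in>F. A \<subset> B)"

definition wtF :: "nat set set \<Rightarrow> (nat \<Rightarrow> 'a::zero) \<Rightarrow> nat" where
  "wtF F x = Min {card \<A> | \<A>. \<A> \<subseteq> F \<and> supp x \<subseteq> \<Union>\<A>}"

definition dF :: "nat set set \<Rightarrow> (nat \<Rightarrow> 'a::ab_group_add) \<Rightarrow> (nat \<Rightarrow> 'a) \<Rightarrow> nat" where
  "dF F x y = wtF F (\<lambda>i. x i - y i)"

definition linear_code :: "nat \<Rightarrow> (nat \<Rightarrow> 'a::field) set \<Rightarrow> bool" where
  "linear_code n C \<longleftrightarrow> C \<subseteq> vecs n \<and> (\<lambda>_. 0) \<in> C \<and>
     (\<forall>x\<in>C. \<forall>y\<in>C. (\<lambda>i. x i + y i) \<in> C) \<and> (\<forall>a. \<forall>x\<in>C. (\<lambda>i. a * x i) \<in> C)"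

definition dual_code :: "nat \<Rightarrow> (nat \<Rightarrow> 'a::field) set \<Rightarrow> (nat \<Rightarrow> 'a) set" where
  "dual_code n C = {u \<in> vecs n. \<forall>c\<in>C. (\<Sum>i<n. u i * c i) = 0}"

text \<open>Weight enumerator W_C(x,y), a homogeneous bivariate integer polynomial, represented by its
  polynomial function on int x int (equality of such functions is equality of polynomials).\<close>
definition weight_enum :: "nat set set \<Rightarrow> (nat \<Rightarrow> 'a::zero) set \<Rightarrow> int \<Rightarrow> int \<Rightarrow> int" where
  "weight_enum F C = (\<lambda>x y. let D = Max (wtF F ` C) in
      \<Sum>c\<in>C. x ^ (D - wtF F c) * y ^ (wtF F c))"

definition admits_MacWilliams :: "'a::{finite,field} itself \<Rightarrow> nat \<Rightarrow> nat set set \<Rightarrow> bool" where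
  "admits_MacWilliams (T :: 'a itself) n F \<longleftrightarrow>
     (\<forall>(C1 :: (nat \<Rightarrow> 'a) set) (C2 :: (nat \<Rightarrow> 'a) set). linear_code n C1 \<longrightarrow> linear_code n C2 \<longrightarrow>
        weight_enum F C1 = weight_enum F C2 \<longrightarrow>
        weight_enum F (dual_code n C1) = weight_enum F (dual_code n C2))"

definition k_partition :: "nat \<Rightarrow> nat set set \<Rightarrow> nat \<Rightarrow> bool" where
  "k_partition n F k \<longleftrightarrow> partition_on {..<n} F \<and> (\<forall>A\<in>F. card A = k)"

end

theory Submission
  imports Defs "HOL-Library.FuncSet" "HOL-Computational_Algebra.Polynomial"
begin

definition VT :: "nat \<Rightarrow> nat set \<Rightarrow> (nat \<Rightarrow> 'a::zero) set" where
  "VT n T = {x \<in> vecs n. \<forall>i. i \<notin> T \<longrightarrow> x i = 0}"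

lemma card_VT:
  assumes "T \<subseteq> {..<n}"
  shows "card (VT n T :: (nat \<Rightarrow> 'a::{finite,zero}) set) = card (UNIV::'a set) ^ card T"
    and "finite (VT n T :: (nat \<Rightarrow> 'a::{finite,zero}) set)"
proof -
  have fT: "finite T" using assms finite_subset by blast
  have bij: "bij_betw (\<lambda>x. restrict x T) (VT n T :: (nat \<Rightarrow> 'a) set) (PiE T (\<lambda>_. UNIV))"
  proof (rule bij_betw_byWitness[where f'="\<lambda>f i. if i \<in> T then f i else 0"])
    show "\<forall>a\<in>VT n T. (\<lambda>i. if i \<in> T then restrict a T i else 0) = a"
      by (auto simp: VT_def)
    show "\<forall>a'\<in>PiE T (\<lambda>_. UNIV). restrict (\<lambda>i. if i \<in> T then a' i else 0) T = a'"
      by (auto simp: PiE_def extensional_def restrict_def)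
    show "(\<lambda>x. restrict x T) ` VT n T \<subseteq> PiE T (\<lambda>_. UNIV)" by auto
    show "(\<lambda>f i. if i \<in> T then f i else 0) ` PiE T (\<lambda>_. UNIV) \<subseteq> VT n T"
      using assms by (auto simp: VT_def vecs_def)
  qed
  have "card (VT n T :: (nat \<Rightarrow> 'a) set) = card (PiE T (\<lambda>_. UNIV :: 'a set))"
    using bij_betw_same_card[OF bij] .
  also have "\<dots> = card (UNIV::'a set) ^ card T" by (simp add: card_PiE fT)
  finally show "card (VT n T :: (nat \<Rightarrow> 'a) set) = card (UNIV::'a set) ^ card T" .
  show "finite (VT n T :: (nat \<Rightarrow> 'a) set)"
    using bij_betw_finite[OF bij] fT by (simp add: finite_PiE)
qed

lemma vecs_VT: "vecs n = VT n {..<n}"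
  by (auto simp: VT_def vecs_def)

lemma finite_vecs: "finite (vecs n :: (nat \<Rightarrow> 'a::{finite,zero}) set)"
  using card_VT(2)[of "{..<n}" n] by (simp add: vecs_VT)


lemma covering_finite: "is_covering n F \<Longrightarrow> finite F"
proof -
  assume "is_covering n F"
  then have "F \<subseteq> Pow {..<n}" unfolding is_covering_def by blast
  then show "finite F" by (rule finite_subset) simp
qed

lemma wt_set_finite:
  assumes "finite F"
  shows "finite {card \<A> |\<A>. \<A> \<subseteq> F \<and> supp x \<subseteq> \<Union>\<A>}"
proof -
  have "{card \<A> |\<A>. \<A> \<subseteq> F \<and> supp x \<subseteq> \<Union>\<A>} \<subseteq> card ` Pow F" by auto
  then show ?thesis by (rule finite_subset) (simp add: assms)
qed

lemma wt_le: "finite F \<Longrightarrow> \<A> \<subseteq> F \<Longrightarrow> supp x \<subseteq> \<Union>\<A> \<Longrightarrow> wtF F x \<le> card \<A>"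
  unfolding wtF_def by (rule Min_le) (simp add: wt_set_finite, blast)

lemma wt_ex:
  assumes "finite F" "supp x \<subseteq> \<Union>F"
  shows "\<exists>\<A>. \<A> \<subseteq> F \<and> supp x \<subseteq> \<Union>\<A> \<and> card \<A> = wtF F x"
proof -
  define S where "S = {card \<A> |\<A>. \<A> \<subseteq> F \<and> supp x \<subseteq> \<Union>\<A>}"
  have fS: "finite S" unfolding S_def by (rule wt_set_finite[OF assms(1)])
  have "card F \<in> S" unfolding S_def using assms(2) by auto
  then have ne: "S \<noteq> {}" by auto
  have "Min S \<in> S" by (rule Min_in[OF fS ne])
  then obtain \<A> where "\<A> \<subseteq> F" "supp x \<subseteq> \<Union>\<A>" "card \<A> = Min S"
    unfolding S_def by auto
  moreover have "wtF F x = Min S" unfolding wtF_def S_def ..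
  ultimately show ?thesis by auto
qed

lemma wt_mono:
  assumes "finite F" "supp y \<subseteq> \<Union>F" "supp x \<subseteq> supp y"
  shows "wtF F x \<le> wtF F y"
proof -
  obtain \<A> where A: "\<A> \<subseteq> F" "supp y \<subseteq> \<Union>\<A>" "card \<A> = wtF F y"
    using wt_ex[OF assms(1,2)] by blast
  have "supp x \<subseteq> \<Union>\<A>" using A(2) assms(3) by (rule order_trans[rotated])
  then have "wtF F x \<le> card \<A>" by (rule wt_le[OF assms(1) A(1)])
  then show ?thesis using A(3) by simp
qed

lemma wt_le1:
  assumes "finite F" "supp x \<subseteq> \<Union>F" "wtF F x \<le> 1" "supp x \<noteq> {}"
  shows "\<exists>C\<in>F. supp x \<subseteq> C"
proof -
  obtain \<A> where A: "\<A> \<subseteq> F" "supp x \<subseteq> \<Union>\<A>" "card \<A> = wtF F x" using wt_ex[OF assms(1,2)] by blast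
  have fA: "finite \<A>" using A(1) assms(1) by (rule finite_subset)
  have "card \<A> \<le> 1" using A assms by simp
  then have "\<forall>a\<in>\<A>. \<forall>b\<in>\<A>. a = b" using fA card_le_Suc0_iff_eq[OF fA] by simp
  then have "\<A> = {} \<or> (\<exists>C. \<A> = {C})" by blast
  moreover have "\<A> \<noteq> {}" using A(2) assms(4) by blast
  ultimately obtain C where C: "\<A> = {C}" by blast
  have "C \<in> F" using A(1) C by simp
  moreover have "supp x \<subseteq> C" using A(2) C by simp
  ultimately show ?thesis by blast
qed

lemma wt_le1I: "finite F \<Longrightarrow> C \<in> F \<Longrightarrow> supp x \<subseteq> C \<Longrightarrow> wtF F x \<le> 1"
  using wt_le[of F "{C}" x] by auto

definition cnt :: "nat set set \<Rightarrow> (nat \<Rightarrow> 'a::zero) set \<Rightarrow> nat \<Rightarrow> nat" where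
  "cnt F C i = card {c\<in>C. wtF F c = i}"

lemma sum_by_fun:
  fixes g :: "nat \<Rightarrow> 'b::comm_semiring_1"
  assumes "finite C" "h ` C \<subseteq> {..N}"
  shows "(\<Sum>c\<in>C. g (h c)) = (\<Sum>i\<le>N. of_nat (card {c\<in>C. h c = i}) * g i)"
proof -
  have "(\<Sum>c\<in>C. g (h c)) = (\<Sum>i\<le>N. \<Sum>c\<in>{c\<in>C. h c = i}. g (h c))"
    using sum.group[OF assms(1) _ assms(2), of "\<lambda>c. g (h c)"] by simp
  also have "\<dots> = (\<Sum>i\<le>N. of_nat (card {c\<in>C. h c = i}) * g i)"
    by (rule sum.cong) auto
  finally show ?thesis .
qed

lemma weight_enum_1: "weight_enum F C 1 y = (\<Sum>c\<in>C. y ^ wtF F c)"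
  by (simp add: weight_enum_def Let_def)

lemma cnt_zero: "finite C \<Longrightarrow> wtF F ` C \<subseteq> {..N} \<Longrightarrow> N < j \<Longrightarrow> cnt F C j = 0"
  unfolding cnt_def by auto

lemma we_extract:
  fixes C1 C2 :: "(nat \<Rightarrow> 'a::zero) set"
  assumes "finite C1" "finite C2" "weight_enum F C1 = weight_enum F C2"
  shows "cnt F C1 = cnt F C2"
proof
  fix j
  define N where "N = Max (insert 0 (wtF F ` (C1 \<union> C2)))"
  have fin: "finite (insert 0 (wtF F ` (C1 \<union> C2)))" using assms by simp
  have N1: "wtF F ` C1 \<subseteq> {..N}" and N2: "wtF F ` C2 \<subseteq> {..N}"
    unfolding N_def using Max_ge[OF fin] by auto
  define p1 where "p1 = (\<Sum>i\<le>N. monom (int (cnt F C1 i)) i)"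
  define p2 where "p2 = (\<Sum>i\<le>N. monom (int (cnt F C2 i)) i)"
  have "poly p1 y = poly p2 y" for y
  proof -
    have "poly p1 y = (\<Sum>c\<in>C1. y ^ wtF F c)"
      unfolding p1_def poly_sum poly_monom cnt_def
      using sum_by_fun[OF assms(1) N1, of "\<lambda>i. y ^ i"] by simp
    also have "\<dots> = (\<Sum>c\<in>C2. y ^ wtF F c)" using assms(3) weight_enum_1 by metis
    also have "\<dots> = poly p2 y"
      unfolding p2_def poly_sum poly_monom cnt_def
      using sum_by_fun[OF assms(2) N2, of "\<lambda>i. y ^ i"] by simp
    finally show ?thesis .
  qed
  then have "p1 = p2" using poly_eq_poly_eq_iff by blast
  show "cnt F C1 j = cnt F C2 j"
  proof (cases "j \<le> N")
    case True
    have "coeff p1 j = coeff p2 j" using \<open>p1 = p2\<close> by simp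
    then have "int (cnt F C1 j) = int (cnt F C2 j)"
      unfolding p1_def p2_def coeff_sum_monom[OF True] .
    then show ?thesis by simp
  next
    case False
    then show ?thesis using cnt_zero[OF assms(1) N1] cnt_zero[OF assms(2) N2] by simp
  qed
qed

lemma sum_cnt_eq:
  fixes g :: "nat \<Rightarrow> 'b::comm_semiring_1"
  fixes C1 C2 :: "(nat \<Rightarrow> 'a::zero) set"
  assumes "finite C1" "finite C2" "cnt F C1 = cnt F C2"
  shows "(\<Sum>c\<in>C1. g (wtF F c)) = (\<Sum>c\<in>C2. g (wtF F c))"
proof -
  define N where "N = Max (insert 0 (wtF F ` (C1 \<union> C2)))"
  have fin: "finite (insert 0 (wtF F ` (C1 \<union> C2)))" using assms by simp
  have N1: "wtF F ` C1 \<subseteq> {..N}" and N2: "wtF F ` C2 \<subseteq> {..N}"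
    unfolding N_def using Max_ge[OF fin] by auto
  have e1: "(\<Sum>c\<in>C1. g (wtF F c)) = (\<Sum>i\<le>N. of_nat (cnt F C1 i) * g i)"
    using sum_by_fun[OF assms(1) N1, of g] unfolding cnt_def .
  have e2: "(\<Sum>c\<in>C2. g (wtF F c)) = (\<Sum>i\<le>N. of_nat (cnt F C2 i) * g i)"
    using sum_by_fun[OF assms(2) N2, of g] unfolding cnt_def .
  show ?thesis using e1 e2 assms(3) by simp
qed

lemma image_cnt_eq:
  fixes C1 C2 :: "(nat \<Rightarrow> 'a::zero) set"
  assumes "finite C1" "finite C2" "cnt F C1 = cnt F C2"
  shows "wtF F ` C1 = wtF F ` C2"
proof -
  have key: "i \<in> wtF F ` C \<longleftrightarrow> cnt F C i \<noteq> 0" if "finite C" for C :: "(nat \<Rightarrow> 'a) set" and i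
    using that unfolding cnt_def by auto
  show ?thesis
  proof (rule set_eqI)
    fix i show "i \<in> wtF F ` C1 \<longleftrightarrow> i \<in> wtF F ` C2"
      using key[OF assms(1), of i] key[OF assms(2), of i] assms(3) by simp
  qed
qed

lemma we_eq:
  fixes C1 C2 :: "(nat \<Rightarrow> 'a::zero) set"
  assumes "finite C1" "finite C2" "cnt F C1 = cnt F C2"
  shows "weight_enum F C1 = weight_enum F C2"
proof (intro ext)
  fix x y :: int
  have D: "Max (wtF F ` C1) = Max (wtF F ` C2)" using image_cnt_eq[OF assms] by simp
  show "weight_enum F C1 x y = weight_enum F C2 x y"
    unfolding weight_enum_def Let_def D
    by (rule sum_cnt_eq[OF assms])
qed


definition bil :: "nat \<Rightarrow> (nat \<Rightarrow> 'a::field) \<Rightarrow> (nat \<Rightarrow> 'a) \<Rightarrow> 'a" where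
  "bil n x y = (\<Sum>i<n. x i * y i)"

definition subsp :: "(nat \<Rightarrow> 'a::field) set \<Rightarrow> bool" where
  "subsp S \<longleftrightarrow> (\<lambda>_. 0) \<in> S \<and> (\<forall>x\<in>S. \<forall>y\<in>S. (\<lambda>i. x i + y i) \<in> S) \<and> (\<forall>a. \<forall>x\<in>S. (\<lambda>i. a * x i) \<in> S)"

lemma bil_add2: "bil n x (\<lambda>i. y i + z i) = bil n x y + bil n x z"
  by (simp add: bil_def distrib_left sum.distrib)
lemma bil_smult2: "bil n x (\<lambda>i. a * y i) = a * bil n x y"
  by (simp add: bil_def sum_distrib_left mult.left_commute)
lemma bil_add1: "bil n (\<lambda>i. y i + z i) x = bil n y x + bil n z x"
  by (simp add: bil_def distrib_right sum.distrib)
lemma bil_smult1: "bil n (\<lambda>i. a * y i) x = a * bil n y x"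
  by (simp add: bil_def sum_distrib_left mult.assoc)
lemma bil_comm: "bil n x y = bil n y x"
  by (simp add: bil_def mult.commute)

lemma card_field_ge2: "2 \<le> card (UNIV :: 'a::{finite,field} set)"
proof -
  have "card {0::'a, 1} = 2" by simp
  moreover have "card {0::'a, 1} \<le> card (UNIV :: 'a set)" by (rule card_mono) auto
  ultimately show ?thesis by simp
qed

lemma fiber_card:
  fixes S :: "(nat \<Rightarrow> 'a::{finite,field}) set" and f :: "(nat \<Rightarrow> 'a) \<Rightarrow> 'a"
  assumes sub: "subsp S"
    and add: "\<And>x y. x\<in>S \<Longrightarrow> y\<in>S \<Longrightarrow> f (\<lambda>i. x i + y i) = f x + f y"
    and sc: "\<And>a x. x \<in> S \<Longrightarrow> f (\<lambda>i. a * x i) = a * f x"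
    and s0: "s0 \<in> S" "f s0 \<noteq> 0"
  shows "card S = card (UNIV::'a set) * card {x\<in>S. f x = 0}"
proof -
  define u where "u = (\<lambda>i. inverse (f s0) * s0 i)"
  have uS: "u \<in> S" using sub s0 unfolding subsp_def u_def by blast
  have fu: "f u = 1" unfolding u_def using sc[OF s0(1)] s0(2) by simp
  have scS: "\<And>a x. x \<in> S \<Longrightarrow> (\<lambda>i. a * x i) \<in> S" using sub unfolding subsp_def by blast
  have addS: "\<And>x y. x \<in> S \<Longrightarrow> y \<in> S \<Longrightarrow> (\<lambda>i. x i + y i) \<in> S" using sub unfolding subsp_def by blast
  define K where "K = {x\<in>S. f x = 0}"
  define g where "g = (\<lambda>x. (f x, (\<lambda>i. x i + (- f x) * u i)))"
  define h where "h = (\<lambda>(a::'a, k::nat \<Rightarrow> 'a). (\<lambda>i. k i + a * u i))"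
  have "bij_betw g S (UNIV \<times> K)"
  proof (rule bij_betw_byWitness[where f'=h])
    show "\<forall>x\<in>S. h (g x) = x" unfolding g_def h_def by (auto simp: algebra_simps)
    show "\<forall>p\<in>UNIV \<times> K. g (h p) = p"
    proof
      fix p assume "p \<in> (UNIV::'a set) \<times> K"
      then obtain a k where p: "p = (a, k)" "k \<in> S" "f k = 0" unfolding K_def by auto
      have "f (h p) = a" unfolding p h_def using add[OF p(2) scS[OF uS]] sc[OF uS] fu p(3) by simp
      then show "g (h p) = p" unfolding g_def h_def p by (auto simp: algebra_simps)
    qed
    show "g ` S \<subseteq> UNIV \<times> K"
    proof
      fix y assume "y \<in> g ` S"
      then obtain x where x: "x \<in> S" "y = g x" by auto
      have e1: "f (\<lambda>i. x i + (- f x) * u i) = f x + f (\<lambda>i. (- f x) * u i)"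
        by (rule add[OF x(1) scS[OF uS]])
      have e2: "f (\<lambda>i. (- f x) * u i) = (- f x) * f u" by (rule sc[OF uS])
      have "f (\<lambda>i. x i + (- f x) * u i) = 0" unfolding e1 e2 fu by simp
      moreover have "(\<lambda>i. x i + (- f x) * u i) \<in> S" using addS[OF x(1) scS[OF uS]] .
      ultimately show "y \<in> UNIV \<times> K" unfolding x(2) g_def K_def by simp
    qed
    show "h ` (UNIV \<times> K) \<subseteq> S"
      unfolding h_def K_def using addS scS uS by auto
  qed
  then have "card S = card ((UNIV::'a set) \<times> K)" by (rule bij_betw_same_card)
  then show ?thesis unfolding K_def by (simp add: card_cartesian_product)
qed

lemma card_filter_sum: "finite A \<Longrightarrow> card {x\<in>A. P x} = (\<Sum>x\<in>A. if P x then 1 else 0)"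
  using sum.inter_filter[of A "\<lambda>_. 1::nat" P] by simp

lemma dual_count:
  fixes X Y :: "(nat \<Rightarrow> 'a::{finite,field}) set"
  assumes fX: "finite X" and fY: "finite Y" and sX: "subsp X" and sY: "subsp Y"
  shows "card {x\<in>X. \<forall>y\<in>Y. bil n x y = 0} * card Y = card {y\<in>Y. \<forall>x\<in>X. bil n x y = 0} * card X"
proof -
  define q where "q = card (UNIV :: 'a set)"
  have q2: "2 \<le> q" unfolding q_def by (rule card_field_ge2)
  have cx: "q * card {y\<in>Y. bil n x y = 0} = (if \<forall>y\<in>Y. bil n x y = 0 then q * card Y else card Y)"
    if "x \<in> X" for x
  proof (cases "\<forall>y\<in>Y. bil n x y = 0")
    case True
    then have "{y\<in>Y. bil n x y = 0} = Y" by auto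
    then show ?thesis using True by simp
  next
    case False
    then obtain y0 where y0: "y0 \<in> Y" "bil n x y0 \<noteq> 0" by auto
    have "card Y = q * card {y\<in>Y. bil n x y = 0}" unfolding q_def
      by (rule fiber_card[where f="bil n x", OF sY _ _ y0]) (simp_all add: bil_add2 bil_smult2)
    then show ?thesis unfolding if_not_P[OF False] by (rule sym)
  qed
  have cy: "q * card {x\<in>X. bil n x y = 0} = (if \<forall>x\<in>X. bil n x y = 0 then q * card X else card X)"
    if "y \<in> Y" for y
  proof (cases "\<forall>x\<in>X. bil n x y = 0")
    case True
    then have "{x\<in>X. bil n x y = 0} = X" by auto
    then show ?thesis using True by simp
  next
    case False
    then obtain x0 where x0: "x0 \<in> X" "bil n x0 y \<noteq> 0" by auto
    have "card X = q * card {x\<in>X. bil n x y = 0}" unfolding q_def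
      by (rule fiber_card[where f="\<lambda>x. bil n x y", OF sX _ _ x0]) (simp_all add: bil_add1 bil_smult1)
    then show ?thesis unfolding if_not_P[OF False] by (rule sym)
  qed
  have swap: "(\<Sum>x\<in>X. card {y\<in>Y. bil n x y = 0}) = (\<Sum>y\<in>Y. card {x\<in>X. bil n x y = 0})"
  proof -
    have "(\<Sum>x\<in>X. card {y\<in>Y. bil n x y = 0}) = (\<Sum>x\<in>X. \<Sum>y\<in>Y. if bil n x y = 0 then 1 else 0)"
      using fY by (simp add: card_filter_sum)
    also have "\<dots> = (\<Sum>y\<in>Y. \<Sum>x\<in>X. if bil n x y = 0 then 1 else 0)" by (rule sum.swap)
    also have "\<dots> = (\<Sum>y\<in>Y. card {x\<in>X. bil n x y = 0})"
      using fX by (simp add: card_filter_sum)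
    finally show ?thesis .
  qed
  define a where "a = card {x\<in>X. \<forall>y\<in>Y. bil n x y = 0}"
  define b where "b = card {y\<in>Y. \<forall>x\<in>X. bil n x y = 0}"
  have ifsum: "(\<Sum>x\<in>A. if P x then c1 else c2) = card {x\<in>A. P x} * c1 + card {x\<in>A. \<not> P x} * c2"
    if "finite A" for A :: "(nat \<Rightarrow> 'a) set" and P and c1 c2 :: nat
  proof -
    have "A \<inter> {x. P x} = {x\<in>A. P x}" "A \<inter> - {x. P x} = {x\<in>A. \<not> P x}" by auto
    then show ?thesis using sum.If_cases[OF that, of P "\<lambda>_. c1" "\<lambda>_. c2"] by simp
  qed
  have split: "card {x\<in>A. P x} + card {x\<in>A. \<not> P x} = card A"
    if "finite A" for A :: "(nat \<Rightarrow> 'a) set" and P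
  proof -
    have "{x\<in>A. P x} \<union> {x\<in>A. \<not> P x} = A" by auto
    moreover have "{x\<in>A. P x} \<inter> {x\<in>A. \<not> P x} = {}" by auto
    ultimately show ?thesis using card_Un_disjoint[of "{x\<in>A. P x}" "{x\<in>A. \<not> P x}"] that by simp
  qed
  define a' where "a' = card {x\<in>X. \<not> (\<forall>y\<in>Y. bil n x y = 0)}"
  define b' where "b' = card {y\<in>Y. \<not> (\<forall>x\<in>X. bil n x y = 0)}"
  have aa: "a + a' = card X" unfolding a_def a'_def by (rule split[OF fX])
  have bb: "b + b' = card Y" unfolding b_def b'_def by (rule split[OF fY])
  have "q * (\<Sum>x\<in>X. card {y\<in>Y. bil n x y = 0}) = (\<Sum>x\<in>X. if \<forall>y\<in>Y. bil n x y = 0 then q * card Y else card Y)"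
    unfolding sum_distrib_left by (rule sum.cong) (simp_all add: cx)
  also have "\<dots> = a * (q * card Y) + a' * card Y"
    unfolding a_def a'_def by (rule ifsum[OF fX])
  finally have E1: "q * (\<Sum>x\<in>X. card {y\<in>Y. bil n x y = 0}) = a * (q * card Y) + a' * card Y" .
  have "q * (\<Sum>y\<in>Y. card {x\<in>X. bil n x y = 0}) = (\<Sum>y\<in>Y. if \<forall>x\<in>X. bil n x y = 0 then q * card X else card X)"
    unfolding sum_distrib_left by (rule sum.cong) (simp_all add: cy)
  also have "\<dots> = b * (q * card X) + b' * card X"
    unfolding b_def b'_def by (rule ifsum[OF fY])
  finally have E2: "q * (\<Sum>y\<in>Y. card {x\<in>X. bil n x y = 0}) = b * (q * card X) + b' * card X" .
  have "a * (q * card Y) + a' * card Y = b * (q * card X) + b' * card X"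
    using E1 E2 swap by simp
  then have "int (a * (q * card Y) + a' * card Y) = int (b * (q * card X) + b' * card X)"
    by (rule arg_cong)
  then have E: "int a * (int q * int (card Y)) + int a' * int (card Y)
      = int b * (int q * int (card X)) + int b' * int (card X)" by simp
  have a': "int a' = int (card X) - int a" using aa by linarith
  have b': "int b' = int (card Y) - int b" using bb by linarith
  have "int a * (int q * int (card Y)) + (int (card X) - int a) * int (card Y)
      = int b * (int q * int (card X)) + (int (card Y) - int b) * int (card X)"
    using E unfolding a' b' .
  then have "(int q - 1) * (int a * int (card Y)) = (int q - 1) * (int b * int (card X))"
    by (simp add: algebra_simps)
  moreover have "int q - 1 \<noteq> 0" using q2 by simp
  ultimately have "int a * int (card Y) = int b * int (card X)" by simp
  then have "int (a * card Y) = int (b * card X)" by simp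
  then show ?thesis unfolding a_def b_def by (simp only: of_nat_eq_iff)
qed


lemma lin_subsp: "linear_code n C \<Longrightarrow> subsp C"
  unfolding linear_code_def subsp_def by blast

lemma lin_vecs: "linear_code n C \<Longrightarrow> C \<subseteq> vecs n"
  unfolding linear_code_def by blast

lemma lin_finite: "linear_code n (C :: (nat \<Rightarrow> 'a::{finite,field}) set) \<Longrightarrow> finite C"
  using lin_vecs finite_vecs finite_subset by metis

lemma lin_zero: "linear_code n C \<Longrightarrow> (\<lambda>_. 0) \<in> C"
  unfolding linear_code_def by blast

lemma VT_subsp: "subsp (VT n T)"
  unfolding subsp_def VT_def vecs_def by auto

lemma VT_vecs: "VT n T \<subseteq> vecs n"
  unfolding VT_def by blast

lemma dual_linear: "linear_code n (dual_code n C)"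
proof -
  have "(\<Sum>i<n. (u i + v i) * c i) = (\<Sum>i<n. u i * c i) + (\<Sum>i<n. v i * c i)" for u v c :: "nat \<Rightarrow> 'a"
    by (simp add: distrib_right sum.distrib)
  moreover have "(\<Sum>i<n. (a * u i) * c i) = a * (\<Sum>i<n. u i * c i)" for a and u c :: "nat \<Rightarrow> 'a"
    by (simp add: sum_distrib_left mult.assoc)
  ultimately show ?thesis
    unfolding linear_code_def dual_code_def vecs_def by auto
qed

lemma bil_delta:
  fixes y :: "nat \<Rightarrow> 'a::field"
  assumes "i < n"
  shows "bil n (\<lambda>j. if j = i then 1 else 0) y = y i"
proof -
  have "bil n (\<lambda>j. if j = i then 1 else 0) y = (\<Sum>j<n. if j = i then y j else 0)"
    unfolding bil_def by (rule sum.cong) auto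
  also have "\<dots> = y i" using assms by (simp add: sum.delta)
  finally show ?thesis .
qed

lemma orth_VT:
  fixes y :: "nat \<Rightarrow> 'a::field"
  assumes T: "T \<subseteq> {..<n}" and y: "y \<in> vecs n"
  shows "(\<forall>x\<in>VT n T. bil n x y = 0) \<longleftrightarrow> y \<in> VT n ({..<n} - T)"
proof
  assume H: "\<forall>x\<in>VT n T. bil n x y = 0"
  have "y i = 0" if "i \<notin> {..<n} - T" for i
  proof (cases "i < n")
    case True
    then have iT: "i \<in> T" using that by auto
    have "(\<lambda>j. if j = i then 1 else (0::'a)) \<in> VT n T" using iT True unfolding VT_def vecs_def by auto
    then have "bil n (\<lambda>j. if j = i then 1 else (0::'a)) y = 0" using H by blast
    then show ?thesis by (simp only: bil_delta[OF True])
  next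
    case False
    then show ?thesis using y unfolding vecs_def by auto
  qed
  then show "y \<in> VT n ({..<n} - T)" using y unfolding VT_def by blast
next
  assume H: "y \<in> VT n ({..<n} - T)"
  show "\<forall>x\<in>VT n T. bil n x y = 0"
  proof
    fix x :: "nat \<Rightarrow> 'a" assume x: "x \<in> VT n T"
    have "x i * y i = 0" if "i < n" for i
    proof (cases "i \<in> T")
      case True
      then show ?thesis using H unfolding VT_def by auto
    next
      case False
      then show ?thesis using x unfolding VT_def by auto
    qed
    then show "bil n x y = 0" unfolding bil_def by (intro sum.neutral ballI) simp
  qed
qed

lemma key_identity:
  fixes C :: "(nat \<Rightarrow> 'a::{finite,field}) set"
  assumes C: "linear_code n C" and T: "T \<subseteq> {..<n}"
  shows "card (dual_code n C \<inter> VT n T) * card C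
       = card (C \<inter> VT n ({..<n} - T)) * card (UNIV::'a set) ^ card T"
proof -
  have e1: "{x\<in>VT n T. \<forall>y\<in>C. bil n x y = 0} = dual_code n C \<inter> VT n T"
    unfolding dual_code_def bil_def using VT_vecs by blast
  have e2: "{y\<in>C. \<forall>x\<in>VT n T. bil n x y = 0} = C \<inter> VT n ({..<n} - T)"
    using orth_VT[OF T] lin_vecs[OF C] by blast
  show ?thesis
    using dual_count[OF card_VT(2)[OF T] lin_finite[OF C] VT_subsp lin_subsp[OF C], of n]
    unfolding e1 e2 card_VT(1)[OF T] .
qed

lemma dual_VT:
  assumes T: "T \<subseteq> {..<n}"
  shows "dual_code n (VT n T :: (nat \<Rightarrow> 'a::field) set) = VT n ({..<n} - T)"
proof -
  have "dual_code n (VT n T) = {y \<in> vecs n. \<forall>x\<in>VT n T. bil n x y = 0}"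
    unfolding dual_code_def bil_def by (simp add: mult.commute)
  also have "\<dots> = VT n ({..<n} - T)"
    using orth_VT[OF T] VT_vecs by blast
  finally show ?thesis .
qed


lemma part_eq: "partition_on A F \<Longrightarrow> X \<in> F \<Longrightarrow> Y \<in> F \<Longrightarrow> i \<in> X \<Longrightarrow> i \<in> Y \<Longrightarrow> X = Y"
  unfolding partition_on_def pairwise_def disjnt_def by blast

lemma supp_vecs: "c \<in> vecs n \<Longrightarrow> supp c \<subseteq> {..<n}"
proof
  fix i assume c: "c \<in> vecs n" and i: "i \<in> supp c"
  show "i \<in> {..<n}"
  proof (rule ccontr)
    assume "i \<notin> {..<n}"
    then have "n \<le> i" by simp
    then have "c i = 0" using c unfolding vecs_def by blast
    then show False using i unfolding supp_def by simp
  qed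
qed

definition touched :: "nat set set \<Rightarrow> (nat \<Rightarrow> 'a::zero) \<Rightarrow> nat set set" where
  "touched F c = {A\<in>F. A \<inter> supp c \<noteq> {}}"

lemma part_finite: "partition_on {..<n::nat} F \<Longrightarrow> finite F"
proof -
  assume "partition_on {..<n::nat} F"
  then have "F \<subseteq> Pow {..<n}" unfolding partition_on_def by blast
  then show "finite F" by (rule finite_subset) simp
qed

lemma part_wt:
  assumes P: "partition_on {..<n::nat} F" and c: "c \<in> vecs n"
  shows "wtF F c = card (touched F c)"
proof (rule antisym)
  have fF: "finite F" using part_finite[OF P] .
  have U: "\<Union>F = {..<n}" using P unfolding partition_on_def by blast
  have sc: "supp c \<subseteq> \<Union>F" using supp_vecs[OF c] U by simp
  have "supp c \<subseteq> \<Union>(touched F c)"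
  proof
    fix i assume i: "i \<in> supp c"
    then obtain A where "A \<in> F" "i \<in> A" using sc by blast
    then show "i \<in> \<Union>(touched F c)" using i unfolding touched_def by blast
  qed
  then show "wtF F c \<le> card (touched F c)"
    by (rule wt_le[OF fF, rotated]) (auto simp: touched_def)
  obtain \<A> where A: "\<A> \<subseteq> F" "supp c \<subseteq> \<Union>\<A>" "card \<A> = wtF F c" using wt_ex[OF fF sc] by blast
  have "touched F c \<subseteq> \<A>"
  proof
    fix B assume "B \<in> touched F c"
    then obtain i where B: "B \<in> F" "i \<in> B" "i \<in> supp c" unfolding touched_def by blast
    then obtain B' where "B' \<in> \<A>" "i \<in> B'" using A(2) by blast
    then show "B \<in> \<A>" using part_eq[OF P B(1) _ B(2)] A(1) by blast
  qed
  then show "card (touched F c) \<le> wtF F c"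
    using card_mono[OF finite_subset[OF A(1) fF]] A(3) by simp
qed

lemma part_wt_le:
  assumes P: "partition_on {..<n::nat} F" and c: "c \<in> vecs n"
  shows "wtF F c \<le> card F"
  using part_wt[OF P c] card_mono[OF part_finite[OF P]] unfolding touched_def by simp

lemma part_VT_iff:
  assumes P: "partition_on {..<n::nat} F" and S: "S \<subseteq> F" and c: "c \<in> vecs n"
  shows "c \<in> VT n (\<Union>S) \<longleftrightarrow> touched F c \<subseteq> S"
proof
  assume H: "c \<in> VT n (\<Union>S)"
  show "touched F c \<subseteq> S"
  proof
    fix A assume "A \<in> touched F c"
    then obtain i where A: "A \<in> F" "i \<in> A" "c i \<noteq> 0" unfolding touched_def supp_def by blast
    then have "i \<in> \<Union>S" using H unfolding VT_def by blast
    then obtain A' where "A' \<in> S" "i \<in> A'" by blast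
    then show "A \<in> S" using part_eq[OF P A(1) _ A(2)] S by blast
  qed
next
  assume H: "touched F c \<subseteq> S"
  have "c i = 0" if "i \<notin> \<Union>S" for i
  proof (rule ccontr)
    assume ci: "c i \<noteq> 0"
    then have "i \<in> supp c" unfolding supp_def by simp
    then have "i \<in> \<Union>F" using supp_vecs[OF c] P unfolding partition_on_def by blast
    then obtain A where "A \<in> F" "i \<in> A" by blast
    then have "A \<in> touched F c" using \<open>i \<in> supp c\<close> unfolding touched_def by blast
    then show False using H that \<open>i \<in> A\<close> by blast
  qed
  then show "c \<in> VT n (\<Union>S)" using c unfolding VT_def by blast
qed

lemma part_compl:
  assumes P: "partition_on {..<n::nat} F" and S: "S \<subseteq> F"
  shows "{..<n} - \<Union>S = \<Union>(F - S)"
proof -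
  have U: "\<Union>F = {..<n}" using P unfolding partition_on_def by blast
  show ?thesis
  proof
    show "{..<n} - \<Union>S \<subseteq> \<Union>(F - S)" using U by blast
    show "\<Union>(F - S) \<subseteq> {..<n} - \<Union>S"
    proof
      fix i assume "i \<in> \<Union>(F - S)"
      then obtain A where A: "A \<in> F" "A \<notin> S" "i \<in> A" by blast
      have "i \<notin> \<Union>S"
      proof
        assume "i \<in> \<Union>S"
        then obtain B where "B \<in> S" "i \<in> B" by blast
        then show False using part_eq[OF P A(1) _ A(3)] S A(2) by blast
      qed
      then show "i \<in> {..<n} - \<Union>S" using A U by blast
    qed
  qed
qed

lemma part_card_union:
  assumes P: "partition_on {..<n::nat} F" and K: "\<forall>A\<in>F. card A = k" and S: "S \<subseteq> F"
  shows "card (\<Union>S) = k * card S"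
proof -
  have "pairwise disjnt S" using pairwise_subset[OF partition_onD2[OF P] S] .
  moreover have "\<And>A. A \<in> S \<Longrightarrow> finite A"
  proof -
    fix A assume "A \<in> S"
    then have "A \<subseteq> {..<n}" using S P unfolding partition_on_def by blast
    then show "finite A" by (rule finite_subset) simp
  qed
  ultimately have "card (\<Union>S) = sum card S" by (rule card_Union_disjoint)
  also have "\<dots> = sum (\<lambda>_. k) S" using K S by (intro sum.cong) auto
  also have "\<dots> = k * card S" by simp
  finally show ?thesis .
qed

definition Esum :: "nat \<Rightarrow> nat set set \<Rightarrow> (nat \<Rightarrow> 'a::zero) set \<Rightarrow> nat \<Rightarrow> nat" where
  "Esum n F C j = (\<Sum>R\<in>{R. R \<subseteq> F \<and> card R = j}. card (C \<inter> VT n (\<Union>(F - R))))"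

lemma E_formula:
  assumes P: "partition_on {..<n::nat} F" and C: "C \<subseteq> vecs n" "finite C"
  shows "Esum n F C j = (\<Sum>c\<in>C. (card F - wtF F c) choose j)"
proof -
  have fF: "finite F" using part_finite[OF P] .
  define Rs where "Rs = {R. R \<subseteq> F \<and> card R = j}"
  have "Rs \<subseteq> Pow F" unfolding Rs_def by blast
  then have fRs: "finite Rs" by (rule finite_subset) (simp add: fF)
  have mem: "c \<in> VT n (\<Union>(F - R)) \<longleftrightarrow> R \<inter> touched F c = {}" if "c \<in> C" "R \<in> Rs" for c R
  proof -
    have cv: "c \<in> vecs n" using that(1) C(1) by blast
    have "c \<in> VT n (\<Union>(F - R)) \<longleftrightarrow> touched F c \<subseteq> F - R"
      by (rule part_VT_iff[OF P Diff_subset cv])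
    also have "\<dots> \<longleftrightarrow> R \<inter> touched F c = {}" unfolding touched_def by blast
    finally show ?thesis .
  qed
  have "Esum n F C j = (\<Sum>R\<in>Rs. \<Sum>c\<in>C. if c \<in> VT n (\<Union>(F - R)) then 1 else 0)"
    unfolding Esum_def Rs_def[symmetric]
  proof (rule sum.cong[OF refl])
    fix R show "card (C \<inter> VT n (\<Union>(F - R))) = (\<Sum>c\<in>C. if c \<in> VT n (\<Union>(F - R)) then 1 else 0)"
      using card_filter_sum[OF C(2), of "\<lambda>c. c \<in> VT n (\<Union>(F - R))"]
      by (simp add: Int_def)
  qed
  also have "\<dots> = (\<Sum>c\<in>C. \<Sum>R\<in>Rs. if c \<in> VT n (\<Union>(F - R)) then 1 else 0)" by (rule sum.swap)
  also have "\<dots> = (\<Sum>c\<in>C. (card F - wtF F c) choose j)"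
  proof (rule sum.cong[OF refl])
    fix c assume c: "c \<in> C"
    have "(\<Sum>R\<in>Rs. if c \<in> VT n (\<Union>(F - R)) then 1 else 0) = (\<Sum>R\<in>Rs. if R \<inter> touched F c = {} then 1 else 0)"
      using mem[OF c] by (intro sum.cong) auto
    also have "\<dots> = card {R\<in>Rs. R \<inter> touched F c = {}}" using card_filter_sum[OF fRs] by simp
    also have "{R\<in>Rs. R \<inter> touched F c = {}} = {R. R \<subseteq> F - touched F c \<and> card R = j}"
      unfolding Rs_def by blast
    also have "card \<dots> = card (F - touched F c) choose j" using fF by (simp add: n_subsets)
    also have "card (F - touched F c) = card F - card (touched F c)"
      using fF by (intro card_Diff_subset) (auto simp: touched_def)
    also have "card (touched F c) = wtF F c"
    proof -
      have "c \<in> vecs n" using c C(1) by blast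
      then show ?thesis using part_wt[OF P] by metis
    qed
    finally show "(\<Sum>R\<in>Rs. if c \<in> VT n (\<Union>(F - R)) then 1 else 0) = (card F - wtF F c) choose j" .
  qed
  finally show ?thesis .
qed


lemma binom_split:
  fixes f :: "nat \<Rightarrow> nat"
  assumes "j \<le> m"
  shows "(\<Sum>s\<le>m. f s * (s choose j)) = f j + (\<Sum>s\<in>{j<..m}. f s * (s choose j))"
proof -
  have U: "{..m} = {..<j} \<union> insert j {j<..m}" using assms by auto
  have "(\<Sum>s\<le>m. f s * (s choose j)) = (\<Sum>s\<in>{..<j}. f s * (s choose j)) + (\<Sum>s\<in>insert j {j<..m}. f s * (s choose j))"
    unfolding U by (rule sum.union_disjoint) auto
  also have "(\<Sum>s\<in>{..<j}. f s * (s choose j)) = 0" by (intro sum.neutral) auto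
  also have "(\<Sum>s\<in>insert j {j<..m}. f s * (s choose j)) = f j + (\<Sum>s\<in>{j<..m}. f s * (s choose j))"
    by (subst sum.insert) auto
  finally show ?thesis by simp
qed

lemma binom_inv:
  fixes a b :: "nat \<Rightarrow> nat"
  assumes H: "\<And>j. j \<le> m \<Longrightarrow> (\<Sum>s\<le>m. a s * (s choose j)) = (\<Sum>s\<le>m. b s * (s choose j))"
  shows "s \<le> m \<Longrightarrow> a s = b s"
proof (induction "m - s" arbitrary: s rule: less_induct)
  case less
  have IH: "a t = b t" if "t \<in> {s<..m}" for t
    using less.hyps[of t] that less.prems by auto
  have "a s + (\<Sum>t\<in>{s<..m}. a t * (t choose s)) = b s + (\<Sum>t\<in>{s<..m}. b t * (t choose s))"
    using H[OF less.prems] unfolding binom_split[OF less.prems] .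
  moreover have "(\<Sum>t\<in>{s<..m}. a t * (t choose s)) = (\<Sum>t\<in>{s<..m}. b t * (t choose s))"
    using IH by (intro sum.cong) auto
  ultimately show ?case by simp
qed

lemma reindex_compl:
  assumes fF: "finite F" and j: "j \<le> card F"
  shows "(\<Sum>R\<in>{R. R \<subseteq> F \<and> card R = j}. f R) = (\<Sum>R\<in>{R. R \<subseteq> F \<and> card R = card F - j}. f (F - R))"
proof -
  have cD: "card (F - R) = card F - card R" if "R \<subseteq> F" for R
    using that fF by (intro card_Diff_subset) (auto intro: finite_subset)
  have "bij_betw (\<lambda>R. F - R) {R. R \<subseteq> F \<and> card R = card F - j} {R. R \<subseteq> F \<and> card R = j}"
  proof (rule bij_betw_byWitness[where f'="\<lambda>R. F - R"])
    show "\<forall>R\<in>{R. R \<subseteq> F \<and> card R = card F - j}. F - (F - R) = R" by auto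
    show "\<forall>R\<in>{R. R \<subseteq> F \<and> card R = j}. F - (F - R) = R" by auto
    show "(\<lambda>R. F - R) ` {R. R \<subseteq> F \<and> card R = card F - j} \<subseteq> {R. R \<subseteq> F \<and> card R = j}"
      using cD j by auto
    show "(\<lambda>R. F - R) ` {R. R \<subseteq> F \<and> card R = j} \<subseteq> {R. R \<subseteq> F \<and> card R = card F - j}"
      using cD j by auto
  qed
  then show ?thesis by (rule sum.reindex_bij_betw[symmetric])
qed

lemma dualE:
  fixes C :: "(nat \<Rightarrow> 'a::{finite,field}) set"
  assumes P: "partition_on {..<n::nat} F" and K: "\<forall>A\<in>F. card A = k"
    and L: "linear_code n C" and j: "j \<le> card F"
  shows "Esum n F (dual_code n C) j * card C
       = card (UNIV::'a set) ^ (k * (card F - j)) * (\<Sum>c\<in>C. (card F - wtF F c) choose (card F - j))"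
proof -
  have fF: "finite F" using part_finite[OF P] .
  define q where "q = card (UNIV::'a set)"
  define Rs where "Rs = {R. R \<subseteq> F \<and> card R = j}"
  have U: "\<Union>F = {..<n}" using P unfolding partition_on_def by blast
  have step: "card (dual_code n C \<inter> VT n (\<Union>(F - R))) * card C = q ^ (k * (card F - j)) * card (C \<inter> VT n (\<Union>R))"
    if R: "R \<in> Rs" for R
  proof -
    have RF: "R \<subseteq> F" and cR: "card R = j" using R unfolding Rs_def by auto
    have T: "\<Union>(F - R) \<subseteq> {..<n}" using U by blast
    have c1: "{..<n} - \<Union>(F - R) = \<Union>R"
      using part_compl[OF P, of "F - R"] RF by (simp add: Diff_Diff_Int Int_absorb1)
    have c2: "card (\<Union>(F - R)) = k * (card F - j)"
      using part_card_union[OF P K, of "F - R"] card_Diff_subset[OF finite_subset[OF RF fF] RF] cR by simp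
    show ?thesis using key_identity[OF L T] unfolding c1 c2 q_def by (simp add: mult.commute)
  qed
  have "Esum n F (dual_code n C) j * card C = (\<Sum>R\<in>Rs. card (dual_code n C \<inter> VT n (\<Union>(F - R))) * card C)"
    unfolding Esum_def Rs_def by (simp add: sum_distrib_right)
  also have "\<dots> = (\<Sum>R\<in>Rs. q ^ (k * (card F - j)) * card (C \<inter> VT n (\<Union>R)))"
    by (rule sum.cong[OF refl]) (rule step)
  also have "\<dots> = q ^ (k * (card F - j)) * (\<Sum>R\<in>Rs. card (C \<inter> VT n (\<Union>R)))"
    by (simp add: sum_distrib_left)
  also have "(\<Sum>R\<in>Rs. card (C \<inter> VT n (\<Union>R))) = Esum n F C (card F - j)"
    unfolding Rs_def Esum_def by (rule reindex_compl[OF fF j])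
  also have "\<dots> = (\<Sum>c\<in>C. (card F - wtF F c) choose (card F - j))"
    by (rule E_formula[OF P lin_vecs[OF L] lin_finite[OF L]])
  finally show ?thesis unfolding q_def .
qed

lemma card_by_cnt:
  fixes C1 C2 :: "(nat \<Rightarrow> 'a::zero) set"
  assumes "finite C1" "finite C2" "cnt F C1 = cnt F C2"
  shows "card C1 = card C2"
  using sum_cnt_eq[OF assms, of "\<lambda>_. 1::nat"] by simp

lemma partA:
  fixes C1 C2 :: "(nat \<Rightarrow> 'a::{finite,field}) set"
  assumes P: "partition_on {..<n::nat} F" and K: "\<forall>A\<in>F. card A = k"
    and L1: "linear_code n C1" and L2: "linear_code n C2"
    and W: "weight_enum F C1 = weight_enum F C2"
  shows "weight_enum F (dual_code n C1) = weight_enum F (dual_code n C2)"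
proof -
  define m where "m = card F"
  define D1 where "D1 = dual_code n C1"
  define D2 where "D2 = dual_code n C2"
  have LD1: "linear_code n D1" and LD2: "linear_code n D2" unfolding D1_def D2_def by (rule dual_linear)+
  have f1: "finite C1" and f2: "finite C2" using lin_finite L1 L2 by blast+
  have fD1: "finite D1" and fD2: "finite D2" using lin_finite LD1 LD2 by blast+
  have cC: "cnt F C1 = cnt F C2" by (rule we_extract[OF f1 f2 W])
  have cardC: "card C1 = card C2" by (rule card_by_cnt[OF f1 f2 cC])
  have pos: "0 < card C1" using lin_zero[OF L1] f1 card_gt_0_iff by blast
  have EE: "Esum n F D1 j = Esum n F D2 j" if j: "j \<le> m" for j
  proof -
    have "Esum n F D1 j * card C1 = Esum n F D2 j * card C2"
      unfolding D1_def D2_def dualE[OF P K L1 j[unfolded m_def]] dualE[OF P K L2 j[unfolded m_def]]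
      using sum_cnt_eq[OF f1 f2 cC, of "\<lambda>w. (card F - w) choose (card F - j)"] by simp
    then show ?thesis using cardC pos by simp
  qed
  define a1 where "a1 s = card {d\<in>D1. m - wtF F d = s}" for s
  define a2 where "a2 s = card {d\<in>D2. m - wtF F d = s}" for s
  have Ef: "Esum n F D j = (\<Sum>s\<le>m. a s * (s choose j))"
    if "linear_code n D" "a = (\<lambda>s. card {d\<in>D. m - wtF F d = s})" for D :: "(nat \<Rightarrow> 'a) set" and a and j
  proof -
    have "Esum n F D j = (\<Sum>d\<in>D. (m - wtF F d) choose j)"
      unfolding m_def by (rule E_formula[OF P lin_vecs[OF that(1)] lin_finite[OF that(1)]])
    also have "\<dots> = (\<Sum>s\<le>m. of_nat (card {d\<in>D. m - wtF F d = s}) * (s choose j))"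
      by (rule sum_by_fun[OF lin_finite[OF that(1)]]) auto
    finally show ?thesis using that(2) by simp
  qed
  have aa: "a1 s = a2 s" if "s \<le> m" for s
  proof (rule binom_inv[OF _ that])
    fix j assume "j \<le> m"
    show "(\<Sum>s\<le>m. a1 s * (s choose j)) = (\<Sum>s\<le>m. a2 s * (s choose j))"
      using EE[OF \<open>j \<le> m\<close>] Ef[OF LD1, of a1 j] Ef[OF LD2, of a2 j] unfolding a1_def a2_def by simp
  qed
  have wle: "wtF F d \<le> m" if "d \<in> D" "linear_code n D" for d and D :: "(nat \<Rightarrow> 'a) set"
    unfolding m_def using part_wt_le[OF P] lin_vecs[OF that(2)] that(1) by blast
  have "cnt F D1 = cnt F D2"
  proof
    fix i
    show "cnt F D1 i = cnt F D2 i"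
    proof (cases "i \<le> m")
      case True
      have "{d\<in>D1. wtF F d = i} = {d\<in>D1. m - wtF F d = m - i}"
        using wle[OF _ LD1] True by force
      moreover have "{d\<in>D2. wtF F d = i} = {d\<in>D2. m - wtF F d = m - i}"
        using wle[OF _ LD2] True by force
      ultimately show ?thesis using aa[of "m - i"] unfolding cnt_def a1_def a2_def by simp
    next
      case False
      have e: "{d\<in>D1. wtF F d = i} = {}" "{d\<in>D2. wtF F d = i} = {}"
        using wle[OF _ LD1] wle[OF _ LD2] False by force+
      show ?thesis unfolding cnt_def e(1) e(2) by simp
    qed
  qed
  then show ?thesis unfolding D1_def[symmetric] D2_def[symmetric] by (rule we_eq[OF fD1 fD2])
qed


definition span1 :: "(nat \<Rightarrow> 'a::field) \<Rightarrow> (nat \<Rightarrow> 'a) set" where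
  "span1 u = {(\<lambda>i. t * u i) | t. True}"

lemma span1_linear:
  assumes u: "u \<in> vecs n"
  shows "linear_code n (span1 u)"
  unfolding linear_code_def
proof (intro conjI ballI allI)
  show "span1 u \<subseteq> vecs n" using u unfolding span1_def vecs_def by auto
  show "(\<lambda>_. 0) \<in> span1 u" unfolding span1_def by (rule CollectI, rule exI[of _ 0]) simp
  fix x y assume "x \<in> span1 u" "y \<in> span1 u"
  then obtain t s where ts: "x = (\<lambda>i. t * u i)" "y = (\<lambda>i. s * u i)" unfolding span1_def by blast
  show "(\<lambda>i. x i + y i) \<in> span1 u" unfolding span1_def ts
    by (rule CollectI, rule exI[of _ "t + s"]) (simp add: distrib_right)
next
  fix a x assume "x \<in> span1 u"
  then obtain t where t: "x = (\<lambda>i. t * u i)" unfolding span1_def by blast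
  show "(\<lambda>i. a * x i) \<in> span1 u" unfolding span1_def t
    by (rule CollectI, rule exI[of _ "a * t"]) (simp add: mult.assoc)
qed

lemma dual_span1:
  fixes u :: "nat \<Rightarrow> 'a::field"
  shows "dual_code n (span1 u) = {x \<in> vecs n. bil n x u = 0}"
proof -
  have "(\<forall>c\<in>span1 u. (\<Sum>i<n. x i * c i) = 0) \<longleftrightarrow> bil n x u = 0" for x
  proof
    assume "\<forall>c\<in>span1 u. (\<Sum>i<n. x i * c i) = 0"
    moreover have "u \<in> span1 u" unfolding span1_def by (rule CollectI, rule exI[of _ 1]) simp
    ultimately show "bil n x u = 0" unfolding bil_def by blast
  next
    assume "bil n x u = 0"
    then show "\<forall>c\<in>span1 u. (\<Sum>i<n. x i * c i) = 0"
      unfolding span1_def using bil_smult2[of n x] unfolding bil_def by auto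
  qed
  then show ?thesis unfolding dual_code_def by blast
qed

lemma wt_zero_iff:
  assumes "finite F" "supp x \<subseteq> \<Union>F"
  shows "wtF F x = 0 \<longleftrightarrow> supp x = {}"
proof
  assume "wtF F x = 0"
  then obtain \<A> where A: "\<A> \<subseteq> F" "supp x \<subseteq> \<Union>\<A>" "card \<A> = 0" using wt_ex[OF assms] by auto
  have "finite \<A>" using A(1) assms(1) by (rule finite_subset)
  then have "\<A> = {}" using A(3) by simp
  then show "supp x = {}" using A(2) by simp
next
  assume "supp x = {}"
  then show "wtF F x = 0" using wt_le[OF assms(1), of "{}" x] by simp
qed

lemma cnt_bij:
  assumes bij: "bij_betw g C1 C2" and w: "\<forall>c\<in>C1. wtF F (g c) = wtF F c"
  shows "cnt F C1 = cnt F C2"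
proof
  fix i
  have inj: "inj_on g {c\<in>C1. wtF F c = i}"
    using bij_betw_imp_inj_on[OF bij] by (rule inj_on_subset) blast
  have "g ` {c\<in>C1. wtF F c = i} = {c\<in>C2. wtF F c = i}"
  proof
    show "g ` {c\<in>C1. wtF F c = i} \<subseteq> {c\<in>C2. wtF F c = i}"
    proof
      fix y assume "y \<in> g ` {c\<in>C1. wtF F c = i}"
      then obtain x where x: "x \<in> C1" "wtF F x = i" "y = g x" by blast
      have "g x \<in> C2" by (rule bij_betw_apply[OF bij x(1)])
      then show "y \<in> {c\<in>C2. wtF F c = i}" using x w by simp
    qed
    show "{c\<in>C2. wtF F c = i} \<subseteq> g ` {c\<in>C1. wtF F c = i}"
    proof
      fix y assume y: "y \<in> {c\<in>C2. wtF F c = i}"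
      have "y \<in> g ` C1" using y bij unfolding bij_betw_def by blast
      then obtain x where "x \<in> C1" "y = g x" by blast
      then show "y \<in> g ` {c\<in>C1. wtF F c = i}" using y w by auto
    qed
  qed
  then have "card {c\<in>C2. wtF F c = i} = card {c\<in>C1. wtF F c = i}"
    using card_image[OF inj] by simp
  then show "cnt F C1 i = cnt F C2 i" unfolding cnt_def by simp
qed

lemma card_le1_eq:
  fixes D1 D2 :: "(nat \<Rightarrow> 'a::zero) set"
  assumes "finite D1" "finite D2" "cnt F D1 = cnt F D2"
  shows "card {x\<in>D1. wtF F x \<le> 1} = card {x\<in>D2. wtF F x \<le> 1}"
  using sum_cnt_eq[OF assms, of "\<lambda>w. if w \<le> 1 then 1 else (0::nat)"]
  by (simp add: card_filter_sum[OF assms(1)] card_filter_sum[OF assms(2)])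

lemma partB_overlap:
  assumes n: "n \<ge> 1" and cov: "is_covering n F" and nr: "\<forall>A\<in>F. \<not> redundant F A"
    and A: "A \<in> F" and B: "B \<in> F" and AB: "A \<noteq> B" "A \<inter> B \<noteq> {}"
  shows "\<not> admits_MacWilliams TYPE('a::{finite,field}) n F"
proof
  assume adm: "admits_MacWilliams TYPE('a) n F"
  have fF: "finite F" using covering_finite[OF cov] .
  have UF: "\<Union>F = {..<n}" using cov unfolding is_covering_def by blast
  have AB_sub: "A \<subseteq> {..<n}" "B \<subseteq> {..<n}" using cov A B unfolding is_covering_def by auto
  have "\<not> A \<subseteq> B"
  proof
    assume "A \<subseteq> B"
    then have "A \<subset> B" using AB(1) by blast
    then show False using nr A B unfolding redundant_def by blast
  qed
  then obtain a where a: "a \<in> A" "a \<notin> B" by blast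
  obtain b where b: "b \<in> A" "b \<in> B" using AB(2) by blast
  have ab: "a \<noteq> b" using a b by blast
  have an: "a < n" and bn: "b < n" using a b AB_sub by auto
  define ea :: "nat \<Rightarrow> 'a" where "ea = (\<lambda>i. if i = a then 1 else 0)"
  define eab :: "nat \<Rightarrow> 'a" where "eab = (\<lambda>i. if i = a \<or> i = b then 1 else 0)"
  have ea_v: "ea \<in> vecs n" and eab_v: "eab \<in> vecs n"
    unfolding ea_def eab_def vecs_def using an bn by auto
  have L1: "linear_code n (span1 ea)" by (rule span1_linear[OF ea_v])
  have L2: "linear_code n (span1 eab)" by (rule span1_linear[OF eab_v])
  have wt_mult: "wtF F (\<lambda>i. t * u i) = (if t = 0 then 0 else 1)"
    if "supp u \<subseteq> A" "supp u \<noteq> {}" for t and u :: "nat \<Rightarrow> 'a"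
  proof -
    have s: "supp (\<lambda>i. t * u i) = (if t = 0 then {} else supp u)" unfolding supp_def by auto
    have sF: "supp (\<lambda>i. t * u i) \<subseteq> \<Union>F" using s that(1) A by (auto split: if_splits)
    show ?thesis
    proof (cases "t = 0")
      case True
      then show ?thesis using wt_zero_iff[OF fF sF] s by simp
    next
      case False
      have "supp (\<lambda>i. t * u i) \<subseteq> A" using s that False by simp
      then have "wtF F (\<lambda>i. t * u i) \<le> 1" by (rule wt_le1I[OF fF A])
      moreover have "wtF F (\<lambda>i. t * u i) \<noteq> 0" using wt_zero_iff[OF fF sF] s that False by simp
      ultimately show ?thesis using False by simp
    qed
  qed
  have sea: "supp ea = {a}" unfolding supp_def ea_def by auto
  have seab: "supp eab = {a, b}" unfolding supp_def eab_def by auto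
  define g where "g = (\<lambda>x::nat \<Rightarrow> 'a. (\<lambda>i. x a * eab i))"
  have bij: "bij_betw g (span1 ea) (span1 eab)"
  proof (rule bij_betw_byWitness[where f'="\<lambda>y. (\<lambda>i. y a * ea i)"])
    show "\<forall>x\<in>span1 ea. (\<lambda>i. g x a * ea i) = x" unfolding span1_def g_def ea_def eab_def by auto
    show "\<forall>y\<in>span1 eab. g (\<lambda>i. y a * ea i) = y" unfolding span1_def g_def ea_def eab_def by auto
    show "g ` span1 ea \<subseteq> span1 eab" unfolding span1_def g_def by auto
    show "(\<lambda>y i. y a * ea i) ` span1 eab \<subseteq> span1 ea" unfolding span1_def by auto
  qed
  have wpres: "\<forall>c\<in>span1 ea. wtF F (g c) = wtF F c"
  proof
    fix c assume "c \<in> span1 ea"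
    then obtain t where c: "c = (\<lambda>i. t * ea i)" unfolding span1_def by auto
    have "g c = (\<lambda>i. t * eab i)" unfolding c g_def ea_def by simp
    then show "wtF F (g c) = wtF F c"
      unfolding c using wt_mult[of ea t] wt_mult[of eab t] sea seab a b by simp
  qed
  have W: "weight_enum F (span1 ea) = weight_enum F (span1 eab)"
    by (rule we_eq[OF lin_finite[OF L1] lin_finite[OF L2] cnt_bij[OF bij wpres]])
  define D1 where "D1 = dual_code n (span1 ea)"
  define D2 where "D2 = dual_code n (span1 eab)"
  have WD: "weight_enum F D1 = weight_enum F D2"
    using adm L1 L2 W unfolding admits_MacWilliams_def D1_def D2_def by blast
  have fD1: "finite D1" and fD2: "finite D2" unfolding D1_def D2_def using lin_finite dual_linear by blast+
  have cD: "cnt F D1 = cnt F D2" by (rule we_extract[OF fD1 fD2 WD])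
  have bea: "bil n x ea = x a" for x :: "nat \<Rightarrow> 'a"
    unfolding ea_def using bil_delta[OF an, of x] bil_comm by metis
  have beb: "bil n x (\<lambda>i. if i = b then 1 else 0) = x b" for x :: "nat \<Rightarrow> 'a"
    using bil_delta[OF bn, of x] bil_comm by metis
  have "eab = (\<lambda>i. ea i + (if i = b then 1 else 0))" unfolding eab_def ea_def using ab by auto
  then have beab: "bil n x eab = x a + x b" for x :: "nat \<Rightarrow> 'a"
    using bil_add2[of n x] bea beb by simp
  have D1e: "D1 = {x \<in> vecs n. x a = 0}" unfolding D1_def dual_span1 bea ..
  have D2e: "D2 = {x \<in> vecs n. x a + x b = 0}" unfolding D2_def dual_span1 beab ..
  define S1 where "S1 = {x\<in>D1. wtF F x \<le> 1}"
  define S2 where "S2 = {x\<in>D2. wtF F x \<le> 1}"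
  have eq: "card S2 = card S1" unfolding S1_def S2_def using card_le1_eq[OF fD2 fD1 cD[symmetric]] .
  define \<psi> where "\<psi> = (\<lambda>x::nat \<Rightarrow> 'a. x(a := 0))"
  have inj: "inj_on \<psi> S2"
  proof
    fix x y assume xy: "x \<in> S2" "y \<in> S2" "\<psi> x = \<psi> y"
    have "x b = y b" using fun_cong[OF xy(3), of b] ab unfolding \<psi>_def by simp
    moreover have "x a = - x b" "y a = - y b" using xy(1,2) unfolding S2_def D2e
      by (auto simp: eq_neg_iff_add_eq_0)
    ultimately have "x a = y a" by simp
    then show "x = y" using xy(3) unfolding \<psi>_def by (metis fun_upd_triv fun_upd_upd)
  qed
  have sub: "\<psi> ` S2 \<subseteq> S1"
  proof
    fix y assume "y \<in> \<psi> ` S2"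
    then obtain x where x: "x \<in> S2" "y = \<psi> x" by blast
    have xv: "x \<in> vecs n" using x(1) unfolding S2_def D2e by blast
    have yv: "y \<in> vecs n" using xv an unfolding x(2) \<psi>_def vecs_def by auto
    have "supp y \<subseteq> supp x" unfolding x(2) \<psi>_def supp_def by auto
    moreover have "supp x \<subseteq> \<Union>F" using supp_vecs[OF xv] UF by simp
    ultimately have "wtF F y \<le> wtF F x" using wt_mono[OF fF] by blast
    then show "y \<in> S1" using x yv unfolding S1_def S2_def D1e \<psi>_def by auto
  qed
  define yB where "yB = (\<lambda>i. if i \<in> B then (1::'a) else 0)"
  have yB1: "yB \<in> S1"
  proof -
    have "yB \<in> vecs n" unfolding yB_def vecs_def using AB_sub by auto
    moreover have "yB a = 0" unfolding yB_def using a by simp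
    moreover have "supp yB \<subseteq> B" unfolding yB_def supp_def by auto
    ultimately show ?thesis unfolding S1_def D1e using wt_le1I[OF fF B] by blast
  qed
  have yB2: "yB \<notin> \<psi> ` S2"
  proof
    assume "yB \<in> \<psi> ` S2"
    then obtain x where x: "x \<in> S2" "yB = \<psi> x" by blast
    have xv: "x \<in> vecs n" and xab: "x a + x b = 0" and xw: "wtF F x \<le> 1"
      using x(1) unfolding S2_def D2e by auto
    have xB: "x i = 1" if "i \<in> B" for i
      using fun_cong[OF x(2), of i] that a unfolding yB_def \<psi>_def by (auto split: if_splits)
    have "x a = -1" using xab xB[OF b(2)] by (simp add: eq_neg_iff_add_eq_0)
    then have sa: "a \<in> supp x" unfolding supp_def by simp
    have sB: "B \<subseteq> supp x" using xB unfolding supp_def by auto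
    have sxF: "supp x \<subseteq> \<Union>F" using supp_vecs[OF xv] UF by simp
    obtain C where C: "C \<in> F" "supp x \<subseteq> C" using wt_le1[OF fF sxF xw] sa by blast
    have "B \<subset> C" using sB sa a(2) C(2) by blast
    then show False using nr B C(1) unfolding redundant_def by blast
  qed
  have fS1: "finite S1" unfolding S1_def using fD1 by simp
  have "\<psi> ` S2 \<subset> S1" using sub yB1 yB2 by blast
  then have "card (\<psi> ` S2) < card S1" by (rule psubset_card_mono[OF fS1])
  then show False using card_image[OF inj] eq by simp
qed


lemma VT_linear: "linear_code n (VT n S)"
  using VT_subsp[of n S] VT_vecs[of n S] unfolding subsp_def linear_code_def by blast

lemma cnt_01:
  fixes C :: "(nat \<Rightarrow> 'a::zero) set"
  assumes fC: "finite C" and z: "(\<lambda>_. 0) \<in> C"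
    and w: "\<forall>x\<in>C. wtF F x = (if x = (\<lambda>_. 0) then 0 else 1)"
  shows "cnt F C i = (if i = 0 then 1 else if i = 1 then card C - 1 else 0)"
proof -
  consider "i = 0" | "i = 1" | "i \<noteq> 0 \<and> i \<noteq> 1" by blast
  then show ?thesis
  proof cases
    case 1
    then have e: "{c\<in>C. wtF F c = i} = {(\<lambda>_. 0)}" using w z by (auto split: if_splits)
    show ?thesis using 1 unfolding cnt_def e by simp
  next
    case 2
    then have e: "{c\<in>C. wtF F c = i} = C - {(\<lambda>_. 0)}" using w z by (auto split: if_splits)
    show ?thesis using 2 z fC unfolding cnt_def e by simp
  next
    case 3
    then have e: "{c\<in>C. wtF F c = i} = {}" using w by (auto split: if_splits)
    show ?thesis using 3 unfolding cnt_def e by simp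
  qed
qed

lemma supp_empty_iff: "supp x = {} \<longleftrightarrow> x = (\<lambda>_. 0)"
  unfolding supp_def by auto

lemma partB_sizes:
  assumes P: "partition_on {..<n::nat} F" and A: "A \<in> F" and B: "B \<in> F" and AB: "card A < card B"
  shows "\<not> admits_MacWilliams TYPE('a::{finite,field}) n F"
proof
  assume adm: "admits_MacWilliams TYPE('a) n F"
  have fF: "finite F" using part_finite[OF P] .
  have UF: "\<Union>F = {..<n}" using P unfolding partition_on_def by blast
  have Asub: "A \<subseteq> {..<n}" and Bsub: "B \<subseteq> {..<n}" using A B UF by auto
  obtain T where T: "T \<subseteq> B" "card T = card A" "finite T"
    using obtain_subset_with_card_n[of "card A" B] AB by auto
  have Tsub: "T \<subseteq> {..<n}" using T(1) Bsub by blast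
  have wt01: "\<forall>x\<in>(VT n S :: (nat \<Rightarrow> 'a) set). wtF F x = (if x = (\<lambda>_. 0) then 0 else 1)"
    if S: "S \<subseteq> K" "K \<in> F" for S K
  proof
    fix x :: "nat \<Rightarrow> 'a" assume x: "x \<in> VT n S"
    have sS: "supp x \<subseteq> S" using x unfolding VT_def supp_def by auto
    have sF: "supp x \<subseteq> \<Union>F" using sS S by blast
    have le: "wtF F x \<le> 1" using sS S by (intro wt_le1I[OF fF S(2)]) blast
    show "wtF F x = (if x = (\<lambda>_. 0) then 0 else 1)"
      using wt_zero_iff[OF fF sF] supp_empty_iff[of x] le by auto
  qed
  define C1 :: "(nat \<Rightarrow> 'a) set" where "C1 = VT n A"
  define C2 :: "(nat \<Rightarrow> 'a) set" where "C2 = VT n T"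
  have L1: "linear_code n C1" and L2: "linear_code n C2" unfolding C1_def C2_def by (rule VT_linear)+
  have f1: "finite C1" and f2: "finite C2" using lin_finite L1 L2 by blast+
  have cc: "card C1 = card C2" unfolding C1_def C2_def card_VT(1)[OF Asub] card_VT(1)[OF Tsub] T(2) ..
  have "cnt F C1 = cnt F C2"
  proof
    fix i
    show "cnt F C1 i = cnt F C2 i"
      unfolding cnt_01[OF f1 lin_zero[OF L1] wt01[of A A, folded C1_def], OF order_refl A]
        cnt_01[OF f2 lin_zero[OF L2] wt01[of T B, folded C2_def], OF T(1) B] cc ..
  qed
  then have W: "weight_enum F C1 = weight_enum F C2" by (rule we_eq[OF f1 f2])
  define D1 :: "(nat \<Rightarrow> 'a) set" where "D1 = VT n ({..<n} - A)"
  define D2 :: "(nat \<Rightarrow> 'a) set" where "D2 = VT n ({..<n} - T)"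
  have "weight_enum F (dual_code n C1) = weight_enum F (dual_code n C2)"
    using adm L1 L2 W unfolding admits_MacWilliams_def by blast
  then have WD: "weight_enum F D1 = weight_enum F D2"
    unfolding C1_def C2_def D1_def D2_def dual_VT[OF Asub] dual_VT[OF Tsub] .
  have fD1: "finite D1" and fD2: "finite D2" unfolding D1_def D2_def by (rule card_VT(2)[OF Diff_subset])+
  have cD: "cnt F D1 = cnt F D2" by (rule we_extract[OF fD1 fD2 WD])
  have e1: "{d\<in>D1. wtF F d = card F} = {}"
  proof -
    have "wtF F d < card F" if d: "d \<in> D1" for d
    proof -
      have dv: "d \<in> vecs n" using d unfolding D1_def VT_def by blast
      have "touched F d \<subseteq> F - {A}"
      proof
        fix X assume "X \<in> touched F d"
        then obtain i where "X \<in> F" "i \<in> X" "d i \<noteq> 0" unfolding touched_def supp_def by blast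
        moreover have "i \<notin> A" using \<open>d i \<noteq> 0\<close> d unfolding D1_def VT_def by blast
        ultimately show "X \<in> F - {A}" by blast
      qed
      then have "card (touched F d) \<le> card (F - {A})" using fF by (intro card_mono) auto
      also have "\<dots> < card F" using fF A by (rule card_Diff1_less)
      finally show ?thesis using part_wt[OF P dv] by simp
    qed
    then show ?thesis by force
  qed
  have e2: "{d\<in>D2. wtF F d = card F} \<noteq> {}"
  proof -
    define y :: "nat \<Rightarrow> 'a" where "y = (\<lambda>i. if i < n \<and> i \<notin> T then 1 else 0)"
    have yD: "y \<in> D2" unfolding y_def D2_def VT_def vecs_def by auto
    have yv: "y \<in> vecs n" unfolding y_def vecs_def by auto
    have "touched F y = F"
    proof
      show "touched F y \<subseteq> F" unfolding touched_def by blast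
      show "F \<subseteq> touched F y"
      proof
        fix X assume X: "X \<in> F"
        have "\<exists>i\<in>X. i \<notin> T"
        proof (cases "X = B")
          case True
          show ?thesis
          proof (rule ccontr)
            assume "\<not> (\<exists>i\<in>X. i \<notin> T)"
            then have "B \<subseteq> T" using True by blast
            then have "card B \<le> card T" using T(3) by (rule card_mono[rotated])
            then show False using T(2) AB by simp
          qed
        next
          case False
          have "X \<noteq> {}" using X P unfolding partition_on_def by blast
          then obtain i where i: "i \<in> X" by blast
          have "i \<notin> T"
          proof
            assume "i \<in> T"
            then have "i \<in> B" using T(1) by blast
            then show False using part_eq[OF P X B i] False by blast
          qed
          then show ?thesis using i by blast
        qed
        then obtain i where i: "i \<in> X" "i \<notin> T" by blast
        have "i < n" using i X UF by blast
        then have "i \<in> supp y" using i unfolding y_def supp_def by simp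
        then show "X \<in> touched F y" using X i unfolding touched_def by blast
      qed
    qed
    then have "wtF F y = card F" using part_wt[OF P yv] by simp
    then show ?thesis using yD by blast
  qed
  have "card {d\<in>D2. wtF F d = card F} \<noteq> 0" using e2 fD2 by simp
  then have "cnt F D1 (card F) \<noteq> cnt F D2 (card F)"
    unfolding cnt_def e1 by simp
  then show False using cD by simp
qed

theorem theorem1:
  fixes n :: nat and F :: "nat set set"
  assumes "n \<ge> 1"
    and "is_covering n F"
    and "\<forall>A\<in>F. \<not> redundant F A"
  shows "admits_MacWilliams TYPE('a::{finite,field}) n F \<longleftrightarrow> (\<exists>k. k_partition n F k)"
proof
  assume adm: "admits_MacWilliams TYPE('a) n F"
  show "\<exists>k. k_partition n F k"
  proof (rule ccontr)
    assume nk: "\<not> (\<exists>k. k_partition n F k)"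
    have UF: "\<Union>F = {..<n}" using assms(2) unfolding is_covering_def by blast
    have disj: "A \<inter> B = {}" if "A \<in> F" "B \<in> F" "A \<noteq> B" for A B
    proof (rule ccontr)
      assume "A \<inter> B \<noteq> {}"
      then show False using partB_overlap[OF assms that] adm by blast
    qed
    have "0 \<in> \<Union>F" using UF assms(1) by simp
    then obtain A0 where A0: "A0 \<in> F" "0 \<in> A0" by blast
    have emp: "{} \<notin> F"
    proof
      assume "{} \<in> F"
      moreover have "{} \<subset> A0" using A0 by blast
      ultimately show False using assms(3) A0(1) unfolding redundant_def by blast
    qed
    have P: "partition_on {..<n} F"
      unfolding partition_on_def pairwise_def disjnt_def using UF disj emp by blast
    have "\<not> k_partition n F (card A0)" using nk by blast
    then obtain B where B: "B \<in> F" "card B \<noteq> card A0" unfolding k_partition_def using P by blast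
    show False
    proof (cases "card A0 < card B")
      case True
      then show False using partB_sizes[OF P A0(1) B(1)] adm by blast
    next
      case False
      then have "card B < card A0" using B(2) by simp
      then show False using partB_sizes[OF P B(1) A0(1)] adm by blast
    qed
  qed
next
  assume "\<exists>k. k_partition n F k"
  then obtain k where P: "partition_on {..<n} F" and K: "\<forall>A\<in>F. card A = k"
    unfolding k_partition_def by blast
  show "admits_MacWilliams TYPE('a) n F"
    unfolding admits_MacWilliams_def using partA[OF P K] by blast
qed


end
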